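(* Call two $n\times n$ matrices $B_1,B_2$ equivalent if there is an $n\times n$ permutation matrix $P$ with $P^{T}B_1P=B_2$. Then for each positive integer $n$, the number of equivalence classes of $n\times n$ $(0,1)$-matrices all of whose eigenvalues are positive real numbers equals the number of acyclic digraphs with $n$ unlabeled vertices (i.e. the number of isomorphism classes of acyclic digraphs on $n$ vertices).
   Context: A digraph has, for each ordered pair of vertices $(i,j)$, at most one edge from $i$ to $j$; loops and pairs of opposite edges are permitted, parallel edges are not. A digraph is acyclic if it contains no directed cycle of any length, including loops (cycles of length $1$) and cycles of length $2$. Eigenvalues are taken over $\mathbb{C}$. *)

theory Defs
  imports "Jordan_Normal_Form.Char_Poly"
begin

definition perm_matrix :: "nat \<Rightarrow> complex mat \<Rightarrow> bool" where
  "perm_matrix n P \<longleftrightarrow> (\<exists>p. p permutes {..<n} \<and>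
      P = mat n n (\<lambda>(i, j). if p i = j then 1 else 0))"

definition zero_one_mats :: "nat \<Rightarrow> complex mat set" where
  "zero_one_mats n = {B. B \<in> carrier_mat n n \<and>
      (\<forall>i<n. \<forall>j<n. B $$ (i, j) = 0 \<or> B $$ (i, j) = 1)}"

definition all_eigenvalues_positive_real :: "complex mat \<Rightarrow> bool" where
  "all_eigenvalues_positive_real B \<longleftrightarrow>
      (\<forall>k. eigenvalue B k \<longrightarrow> k \<in> \<real> \<and> Re k > 0)"

definition perm_equiv :: "nat \<Rightarrow> complex mat \<Rightarrow> complex mat \<Rightarrow> bool" where
  "perm_equiv n B1 B2 \<longleftrightarrow> (\<exists>P. perm_matrix n P \<and> transpose_mat P * B1 * P = B2)"

definition pos_eig_01_mats :: "nat \<Rightarrow> complex mat set" where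
  "pos_eig_01_mats n = {B \<in> zero_one_mats n. all_eigenvalues_positive_real B}"

definition num_pos_eig_01_classes :: "nat \<Rightarrow> nat" where
  "num_pos_eig_01_classes n =
     card (pos_eig_01_mats n // {(B1, B2). B1 \<in> pos_eig_01_mats n \<and> B2 \<in> pos_eig_01_mats n
                                          \<and> perm_equiv n B1 B2})"

text \<open>Digraphs on the vertex set {0..<n}: edge relations (loops and opposite edges
  allowed, no parallel edges). Acyclic = no directed cycle, including loops: library acyclic.\<close>
definition acyclic_digraphs :: "nat \<Rightarrow> (nat \<times> nat) set set" where
  "acyclic_digraphs n = {E. E \<subseteq> {..<n} \<times> {..<n} \<and> acyclic E}"

definition digraph_iso :: "nat \<Rightarrow> (nat \<times> nat) set \<Rightarrow> (nat \<times> nat) set \<Rightarrow> bool" where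
  "digraph_iso n E1 E2 \<longleftrightarrow> (\<exists>f. bij_betw f {..<n} {..<n} \<and> E2 = map_prod f f ` E1)"

definition num_unlabeled_acyclic_digraphs :: "nat \<Rightarrow> nat" where
  "num_unlabeled_acyclic_digraphs n =
     card (acyclic_digraphs n // {(E1, E2). E1 \<in> acyclic_digraphs n \<and> E2 \<in> acyclic_digraphs n
                                          \<and> digraph_iso n E1 E2})"

end

theory Submission
  imports Defs "Jordan_Normal_Form.Schur_Decomposition" "Jordan_Normal_Form.Jordan_Normal_Form_Uniqueness"
begin


lemma card_quotient_bij:
  assumes bij: "bij_betw f X Y"
    and R: "\<And>x y. x \<in> X \<Longrightarrow> y \<in> X \<Longrightarrow> R x y \<longleftrightarrow> S (f x) (f y)"
  shows "card (X // {(a,b). a \<in> X \<and> b \<in> X \<and> R a b}) = card (Y // {(a,b). a \<in> Y \<and> b \<in> Y \<and> S a b})"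
proof -
  let ?R = "{(a,b). a \<in> X \<and> b \<in> X \<and> R a b}"
  let ?S = "{(a,b). a \<in> Y \<and> b \<in> Y \<and> S a b}"
  have inj: "inj_on f X" and fX: "f ` X = Y" using bij by (auto simp: bij_betw_def)
  have cl: "f ` (?R `` {x}) = ?S `` {f x}" if x: "x \<in> X" for x
  proof
    show "f ` (?R `` {x}) \<subseteq> ?S `` {f x}" using x R fX by auto
    show "?S `` {f x} \<subseteq> f ` (?R `` {x})"
    proof
      fix y assume "y \<in> ?S `` {f x}"
      then have y: "y \<in> Y" "S (f x) y" by auto
      then obtain x' where x': "x' \<in> X" "y = f x'" using fX by auto
      then show "y \<in> f ` (?R `` {x})" using x y R by auto
    qed
  qed
  have img: "(image f) ` (X // ?R) = Y // ?S"
  proof -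
    have "(image f) ` (X // ?R) = (\<Union>x\<in>X. {f ` (?R `` {x})})" unfolding quotient_def by auto
    also have "\<dots> = (\<Union>x\<in>X. {?S `` {f x}})" using cl by auto
    also have "\<dots> = (\<Union>y\<in>f ` X. {?S `` {y}})" by auto
    also have "\<dots> = Y // ?S" unfolding quotient_def fX ..
    finally show ?thesis .
  qed
  have "inj_on (image f) (X // ?R)"
    by (rule inj_on_subset[OF inj_on_image_Pow[OF inj]]) (auto simp: quotient_def)
  then have "card ((image f) ` (X // ?R)) = card (X // ?R)" by (rule card_image)
  then show ?thesis using img by simp
qed

definition Pm :: "nat \<Rightarrow> (nat \<Rightarrow> nat) \<Rightarrow> complex mat" where
  "Pm n p = mat n n (\<lambda>(i, j). if p i = j then 1 else 0)"

lemma mult_Pm: assumes p: "p permutes {..<n}" and C: "C \<in> carrier_mat n n"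
  and i: "i < n" and j: "j < n"
  shows "(C * Pm n p) $$ (i,j) = C $$ (i, inv_into UNIV p j)"
proof -
  have eqv: "(p l = j) = (l = inv_into UNIV p j)" for l using permutes_inv_eq[OF p, of j l] by auto
  have "(C * Pm n p) $$ (i,j) = (\<Sum>l\<in>{0..<n}. C $$ (i,l) * (if p l = j then 1 else 0))"
    using C i j by (simp add: Pm_def scalar_prod_def)
  also have "\<dots> = (\<Sum>l\<in>{0..<n}. if l = inv_into UNIV p j then C $$ (i,l) else 0)"
    by (rule sum.cong[OF refl]) (simp add: eqv)
  also have "\<dots> = C $$ (i, inv_into UNIV p j)"
    using j permutes_in_image[OF permutes_inv[OF p], of j] by simp
  finally show ?thesis .
qed

lemma Pm_t_mult: assumes p: "p permutes {..<n}" and C: "C \<in> carrier_mat n n"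
  and i: "i < n" and j: "j < n"
  shows "(transpose_mat (Pm n p) * C) $$ (i,j) = C $$ (inv_into UNIV p i, j)"
proof -
  have eqv: "(p l = i) = (l = inv_into UNIV p i)" for l using permutes_inv_eq[OF p, of i l] by auto
  have "(transpose_mat (Pm n p) * C) $$ (i,j) = (\<Sum>l\<in>{0..<n}. (if p l = i then 1 else 0) * C $$ (l,j))"
    using C i j by (simp add: Pm_def scalar_prod_def)
  also have "\<dots> = (\<Sum>l\<in>{0..<n}. if l = inv_into UNIV p i then C $$ (l,j) else 0)"
    by (rule sum.cong[OF refl]) (simp add: eqv)
  also have "\<dots> = C $$ (inv_into UNIV p i, j)"
    using i permutes_in_image[OF permutes_inv[OF p], of i] by simp
  finally show ?thesis .
qed

lemma conj_Pm: assumes p: "p permutes {..<n}" and C: "C \<in> carrier_mat n n"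
  shows "transpose_mat (Pm n p) * C * Pm n p = mat n n (\<lambda>(i,j). C $$ (inv_into UNIV p i, inv_into UNIV p j))"
proof (rule eq_matI, goal_cases)
  case (1 i j)
  have P: "Pm n p \<in> carrier_mat n n" by (simp add: Pm_def)
  have i: "i < n" and j: "j < n" using 1 by auto
  have TC: "transpose_mat (Pm n p) * C \<in> carrier_mat n n" using P C by auto
  show ?case
    using mult_Pm[OF p TC i j] Pm_t_mult[OF p C i] i j permutes_in_image[OF permutes_inv[OF p], of j]
    by simp
qed (auto simp: Pm_def)

definition Mof :: "nat \<Rightarrow> (nat \<times> nat) set \<Rightarrow> complex mat" where
  "Mof n E = mat n n (\<lambda>(i, j). if i = j \<or> (i, j) \<in> E then 1 else 0)"

definition Eof :: "nat \<Rightarrow> complex mat \<Rightarrow> (nat \<times> nat) set" where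
  "Eof n B = {(i, j). i < n \<and> j < n \<and> i \<noteq> j \<and> B $$ (i, j) = 1}"

lemma Mof_carrier[simp]: "Mof n E \<in> carrier_mat n n" by (simp add: Mof_def)

lemma Eof_Mof: assumes "E \<subseteq> {..<n} \<times> {..<n}" and "\<And>x. (x, x) \<notin> E"
  shows "Eof n (Mof n E) = E"
  using assms unfolding Eof_def Mof_def by (auto split: if_splits)

lemma acyc_noloop: "acyclic E \<Longrightarrow> (x, x) \<notin> E"
  unfolding acyclic_def by blast

lemma Mof_conj: assumes p: "p permutes {..<n}" and E: "E \<subseteq> {..<n} \<times> {..<n}"
  shows "transpose_mat (Pm n p) * Mof n E * Pm n p = Mof n (map_prod p p ` E)"
proof -
  let ?q = "inv_into UNIV p"
  have q: "?q permutes {..<n}" using permutes_inv[OF p] .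
  have "mat n n (\<lambda>(i,j). Mof n E $$ (?q i, ?q j)) = Mof n (map_prod p p ` E)"
  proof (rule eq_matI, goal_cases)
    case (1 i j)
    then have i: "i < n" and j: "j < n" by (auto simp: Mof_def)
    have qi: "?q i < n" and qj: "?q j < n" using permutes_in_image[OF q] i j by auto
    have eq: "(?q i = ?q j) = (i = j)" using permutes_inj[OF q] by (auto dest: injD)
    have mem: "((?q i, ?q j) \<in> E) = ((i, j) \<in> map_prod p p ` E)"
    proof
      assume "(?q i, ?q j) \<in> E"
      moreover have "p (?q i) = i" "p (?q j) = j" using permutes_inverses(1)[OF p] by auto
      ultimately show "(i, j) \<in> map_prod p p ` E" by force
    next
      assume "(i, j) \<in> map_prod p p ` E"
      then obtain a b where "(a, b) \<in> E" "i = p a" "j = p b" by auto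
      moreover have "?q (p a) = a" "?q (p b) = b" using permutes_inverses(2)[OF p] by auto
      ultimately show "(?q i, ?q j) \<in> E" by simp
    qed
    show ?case using i j qi qj eq mem by (simp add: Mof_def)
  qed (auto simp: Mof_def)
  then show ?thesis using conj_Pm[OF p Mof_carrier] by simp
qed

lemma acyclic_digraphsD: "E \<in> acyclic_digraphs n \<Longrightarrow> E \<subseteq> {..<n} \<times> {..<n} \<and> acyclic E"
  by (simp add: acyclic_digraphs_def)

lemma iso_equiv: assumes E1: "E1 \<in> acyclic_digraphs n" and E2: "E2 \<in> acyclic_digraphs n"
  shows "digraph_iso n E1 E2 \<longleftrightarrow> perm_equiv n (Mof n E1) (Mof n E2)"
proof
  assume "digraph_iso n E1 E2"
  then obtain f where f: "bij_betw f {..<n} {..<n}" and E2f: "E2 = map_prod f f ` E1"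
    unfolding digraph_iso_def by blast
  define p where "p = (\<lambda>x. if x < n then f x else x)"
  have "bij_betw p {..<n} {..<n}" using f by (rule bij_betw_cong[THEN iffD1, rotated]) (simp add: p_def)
  then have p: "p permutes {..<n}" by (rule bij_imp_permutes) (simp add: p_def)
  have "map_prod p p ` E1 = map_prod f f ` E1"
    using acyclic_digraphsD[OF E1] by (intro image_cong) (auto simp: p_def)
  then have "transpose_mat (Pm n p) * Mof n E1 * Pm n p = Mof n E2"
    using Mof_conj[OF p] acyclic_digraphsD[OF E1] E2f by simp
  moreover have "perm_matrix n (Pm n p)" unfolding perm_matrix_def Pm_def using p by blast
  ultimately show "perm_equiv n (Mof n E1) (Mof n E2)" unfolding perm_equiv_def by blast
next
  assume "perm_equiv n (Mof n E1) (Mof n E2)"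
  then obtain p where p: "p permutes {..<n}"
    and eq: "transpose_mat (Pm n p) * Mof n E1 * Pm n p = Mof n E2"
    unfolding perm_equiv_def perm_matrix_def Pm_def[symmetric] by blast
  have s1: "E1 \<subseteq> {..<n} \<times> {..<n}" and a1: "acyclic E1" using acyclic_digraphsD[OF E1] by auto
  have s2: "E2 \<subseteq> {..<n} \<times> {..<n}" and a2: "acyclic E2" using acyclic_digraphsD[OF E2] by auto
  have M: "Mof n (map_prod p p ` E1) = Mof n E2" using eq Mof_conj[OF p s1] by simp
  have s3: "map_prod p p ` E1 \<subseteq> {..<n} \<times> {..<n}" using s1 permutes_in_image[OF p] by auto
  have l3: "(x, x) \<notin> map_prod p p ` E1" for x
    using acyc_noloop[OF a1] permutes_inj[OF p] by (auto dest: injD)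
  have "map_prod p p ` E1 = E2"
    using Eof_Mof[OF s3 l3] Eof_Mof[OF s2 acyc_noloop[OF a2]] M by metis
  then show "digraph_iso n E1 E2" unfolding digraph_iso_def using permutes_imp_bij[OF p] by blast
qed



lemma acyclic_eig_one:
  assumes E: "E \<subseteq> {..<n} \<times> {..<n}" and ac: "acyclic E"
    and ev: "eigenvalue (Mof n E) k"
  shows "k = 1"
proof -
  obtain v where v: "v \<in> carrier_vec n" and v0: "v \<noteq> 0\<^sub>v n" and Mv: "Mof n E *\<^sub>v v = k \<cdot>\<^sub>v v"
    using ev unfolding eigenvalue_def eigenvector_def by (auto simp: Mof_def)
  define r where "r i = card {a. (a, i) \<in> E\<^sup>+}" for i
  have Et: "E\<^sup>+ \<subseteq> {..<n} \<times> {..<n}" using trancl_subset_Sigma[OF E] .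
  have rmono: "r i < r j" if ij: "(i, j) \<in> E" for i j
  proof -
    have sub: "insert i {a. (a, i) \<in> E\<^sup>+} \<subseteq> {a. (a, j) \<in> E\<^sup>+}"
      using ij r_into_trancl[of i j E] trancl_into_trancl[of _ i E j] by blast
    have ni: "i \<notin> {a. (a, i) \<in> E\<^sup>+}" using ac unfolding acyclic_def by auto
    have "{a. (a, j) \<in> E\<^sup>+} \<subseteq> {..<n}" using Et by blast
    then have fin: "finite {a. (a, j) \<in> E\<^sup>+}" using finite_subset by blast
    have "card (insert i {a. (a, i) \<in> E\<^sup>+}) \<le> r j" unfolding r_def by (rule card_mono[OF fin sub])
    moreover have "finite {a. (a, i) \<in> E\<^sup>+}" by (rule finite_subset[OF _ fin]) (use sub in blast)
    ultimately show ?thesis using ni unfolding r_def by simp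
  qed
  define S where "S = {i. i < n \<and> v $ i \<noteq> 0}"
  have finS: "finite S" unfolding S_def by auto
  have Sne: "S \<noteq> {}"
  proof
    assume "S = {}"
    then have "v = 0\<^sub>v n" using v by (intro eq_vecI) (auto simp: S_def)
    then show False using v0 by simp
  qed
  define m where "m = Max (r ` S)"
  have "m \<in> r ` S" unfolding m_def using finS Sne by (intro Max_in) auto
  then obtain i where iS: "i \<in> S" and ri: "r i = m" by auto
  have rmax: "r j \<le> r i" if "j \<in> S" for j
  proof -
    have "r j \<le> m" unfolding m_def using that finS by (intro Max_ge) auto
    then show ?thesis using ri by simp
  qed
  have i: "i < n" and vi: "v $ i \<noteq> 0" using iS by (auto simp: S_def)
  have "(Mof n E *\<^sub>v v) $ i = (\<Sum>j\<in>{0..<n}. Mof n E $$ (i, j) * v $ j)"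
    using v i by (simp add: scalar_prod_def Mof_def)
  also have "\<dots> = Mof n E $$ (i, i) * v $ i + (\<Sum>j\<in>{0..<n} - {i}. Mof n E $$ (i, j) * v $ j)"
    using i by (subst sum.remove[of _ i]) auto
  also have "(\<Sum>j\<in>{0..<n} - {i}. Mof n E $$ (i, j) * v $ j) = 0"
  proof (rule sum.neutral, rule ballI)
    fix j assume j: "j \<in> {0..<n} - {i}"
    show "Mof n E $$ (i, j) * v $ j = 0"
    proof (cases "(i, j) \<in> E")
      case True
      then have "r i < r j" by (rule rmono)
      then have "j \<notin> S" using rmax by force
      then show ?thesis using j by (simp add: S_def)
    next
      case False
      then show ?thesis using j i by (simp add: Mof_def)
    qed
  qed
  finally have "(Mof n E *\<^sub>v v) $ i = v $ i" using i by (simp add: Mof_def)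
  moreover have "(k \<cdot>\<^sub>v v) $ i = k * v $ i" using v i by simp
  ultimately have "k * v $ i = 1 * v $ i" using Mv by simp
  then show "k = 1" using vi by simp
qed

lemma acyclic_pos: assumes E: "E \<subseteq> {..<n} \<times> {..<n}" and ac: "acyclic E"
  shows "all_eigenvalues_positive_real (Mof n E)"
  unfolding all_eigenvalues_positive_real_def
proof (intro allI impI)
  fix k assume "eigenvalue (Mof n E) k"
  then have "k = 1" using acyclic_eig_one[OF E ac] by blast
  then show "k \<in> \<real> \<and> 0 < Re k" by simp
qed



definition mtrace :: "'a::comm_ring_1 mat \<Rightarrow> 'a" where
  "mtrace A = (\<Sum>i\<in>{0..<dim_row A}. A $$ (i, i))"

lemma mtrace_comm: assumes A: "A \<in> carrier_mat n m" and B: "B \<in> carrier_mat m n"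
  shows "mtrace (A * B) = mtrace (B * A)"
proof -
  have "mtrace (A * B) = (\<Sum>i\<in>{0..<n}. \<Sum>k\<in>{0..<m}. A $$ (i,k) * B $$ (k,i))"
    using A B by (simp add: mtrace_def scalar_prod_def)
  also have "\<dots> = (\<Sum>k\<in>{0..<m}. \<Sum>i\<in>{0..<n}. B $$ (k,i) * A $$ (i,k))"
    by (subst sum.swap) (simp add: mult.commute)
  also have "\<dots> = mtrace (B * A)"
    using A B by (simp add: mtrace_def scalar_prod_def)
  finally show ?thesis .
qed

lemma mtrace_similar: assumes "similar_mat_wit A U P Q" and A: "A \<in> carrier_mat n n"
  shows "mtrace A = mtrace U"
proof -
  from assms have c: "U \<in> carrier_mat n n" "P \<in> carrier_mat n n" "Q \<in> carrier_mat n n"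
    and QP: "Q * P = 1\<^sub>m n" and eq: "A = P * U * Q"
    unfolding similar_mat_wit_def Let_def by auto
  have "mtrace A = mtrace (P * (U * Q))" using eq c by (simp add: assoc_mult_mat)
  also have "\<dots> = mtrace ((U * Q) * P)" using c by (intro mtrace_comm) auto
  also have "(U * Q) * P = U * (Q * P)" using c by (simp add: assoc_mult_mat)
  also have "\<dots> = U" using QP c by simp
  finally show ?thesis .
qed

lemma mtrace_diag: "mtrace U = sum_list (diag_mat U)"
  unfolding mtrace_def diag_mat_def by (simp add: sum_list_sum_nth sum.atLeast0_lessThan_Suc)

lemma det_similar: assumes "similar_mat_wit A U P Q" and A: "A \<in> carrier_mat n n"
  shows "det A = det U"
proof -
  from assms have c: "U \<in> carrier_mat n n" "P \<in> carrier_mat n n" "Q \<in> carrier_mat n n"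
    and PQ: "P * Q = 1\<^sub>m n" and eq: "A = P * U * Q"
    unfolding similar_mat_wit_def Let_def by auto
  have d1: "det A = det P * det U * det Q" using eq c by (simp add: det_mult)
  have "det P * det Q = det (P * Q)" using c by (simp add: det_mult)
  then have d2: "det P * det Q = 1" using PQ by simp
  have "det P * det U * det Q = det U * (det P * det Q)" by (simp add: ac_simps)
  then show ?thesis using d1 d2 by simp
qed

lemma real_list_ones:
  fixes xs :: "real list"
  assumes pos: "\<forall>x\<in>set xs. 0 < x" and pr: "prod_list xs \<ge> 1" and sm: "sum_list xs \<le> length xs"
  shows "\<forall>x\<in>set xs. x = 1"
proof -
  define g where "g x = x - 1 - ln x" for x :: real
  have gnn: "\<And>y. y \<in> set (map g xs) \<Longrightarrow> 0 \<le> y" using pos ln_le_minus_one unfolding g_def by fastforce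
  have lnp: "ln (prod_list xs) = sum_list (map ln xs)" using pos
  proof (induction xs)
    case Nil then show ?case by simp
  next
    case (Cons a xs)
    have "0 < prod_list xs" using Cons.prems by (induction xs) auto
    then have "ln (a * prod_list xs) = ln a + ln (prod_list xs)"
      using Cons.prems by (intro ln_mult_pos) auto
    then show ?case using Cons unfolding prod_list.Cons list.map sum_list.Cons by simp
  qed
  have "sum_list (map g xs) = sum_list xs - length xs - sum_list (map ln xs)"
    unfolding g_def by (induction xs) auto
  also have "\<dots> \<le> 0" using sm lnp pr by (smt (verit) ln_ge_zero)
  finally have "sum_list (map g xs) = 0" using sum_list_nonneg[of "map g xs"] gnn by auto
  then have "\<forall>y\<in>set (map g xs). y = 0" using sum_list_nonneg_eq_0_iff[OF gnn] by blast
  then show ?thesis using pos ln_eq_minus_one unfolding g_def by fastforce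
qed

lemma strict_upper_pow:
  fixes N :: "'a::comm_ring_1 mat"
  assumes N: "N \<in> carrier_mat n n" and su: "\<And>i j. i < n \<Longrightarrow> j < n \<Longrightarrow> j \<le> i \<Longrightarrow> N $$ (i, j) = 0"
  shows "i < n \<Longrightarrow> j < n \<Longrightarrow> j < i + k \<Longrightarrow> (N ^\<^sub>m k) $$ (i, j) = 0"
proof (induction k arbitrary: j)
  case 0
  then show ?case using N by simp
next
  case (Suc k)
  have "(N ^\<^sub>m Suc k) $$ (i, j) = (\<Sum>l\<in>{0..<n}. (N ^\<^sub>m k) $$ (i, l) * N $$ (l, j))"
    using Suc.prems N by (simp add: scalar_prod_def)
  also have "\<dots> = 0"
  proof (rule sum.neutral, rule ballI)
    fix l assume l: "l \<in> {0..<n}"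
    show "(N ^\<^sub>m k) $$ (i, l) * N $$ (l, j) = 0"
    proof (cases "l < i + k")
      case True then show ?thesis using Suc.IH[of l] Suc.prems l by simp
    next
      case False then show ?thesis using su[of l j] Suc.prems l by simp
    qed
  qed
  finally show ?case .
qed

lemma int_path_pow:
  fixes Ai :: "int mat"
  assumes Ai: "Ai \<in> carrier_mat n n" and nn: "\<And>i j. i < n \<Longrightarrow> j < n \<Longrightarrow> Ai $$ (i, j) \<ge> 0"
    and edge: "\<And>i j. (i, j) \<in> E \<Longrightarrow> i < n \<and> j < n \<and> Ai $$ (i, j) \<ge> 1"
  shows "i < n \<Longrightarrow> j < n \<Longrightarrow> (Ai ^\<^sub>m k) $$ (i, j) \<ge> 0 \<and> ((i, j) \<in> E ^^ k \<longrightarrow> (Ai ^\<^sub>m k) $$ (i, j) \<ge> 1)"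
proof (induction k arbitrary: j)
  case 0
  then show ?case using Ai by auto
next
  case (Suc k)
  have eq: "(Ai ^\<^sub>m Suc k) $$ (i, j) = (\<Sum>l\<in>{0..<n}. (Ai ^\<^sub>m k) $$ (i, l) * Ai $$ (l, j))"
    using Suc.prems Ai by (simp add: scalar_prod_def)
  have tnn: "\<forall>l\<in>{0..<n}. (Ai ^\<^sub>m k) $$ (i, l) * Ai $$ (l, j) \<ge> 0"
    using Suc.IH Suc.prems nn by auto
  have "(\<Sum>l\<in>{0..<n}. (Ai ^\<^sub>m k) $$ (i, l) * Ai $$ (l, j)) \<ge> 0"
    using tnn by (intro sum_nonneg) auto
  moreover have "(\<Sum>l\<in>{0..<n}. (Ai ^\<^sub>m k) $$ (i, l) * Ai $$ (l, j)) \<ge> 1" if p: "(i, j) \<in> E ^^ Suc k"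
  proof -
    from p obtain l where il: "(i, l) \<in> E ^^ k" and lj: "(l, j) \<in> E" by auto
    have l: "l < n" and a1: "Ai $$ (l, j) \<ge> 1" using edge[OF lj] by auto
    have b1: "(Ai ^\<^sub>m k) $$ (i, l) \<ge> 1" using Suc.IH[of l] il l Suc.prems by auto
    have "1 \<le> (Ai ^\<^sub>m k) $$ (i, l) * Ai $$ (l, j)" using mult_mono[OF b1 a1] b1 by simp
    also have "\<dots> \<le> (\<Sum>l\<in>{0..<n}. (Ai ^\<^sub>m k) $$ (i, l) * Ai $$ (l, j))"
      using tnn l by (intro member_le_sum) auto
    finally show ?thesis .
  qed
  ultimately show ?case using eq by simp
qed

lemma relpow_loop: assumes "(i, i) \<in> R ^^ m" shows "(i, i) \<in> R ^^ (m * c)"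
proof (induction c)
  case 0 then show ?case by simp
next
  case (Suc c)
  have "R ^^ (m * Suc c) = R ^^ m O R ^^ (m * c)" by (simp add: relpow_add[symmetric])
  then show ?case using assms Suc by auto
qed



lemma ofr_prod: "prod_list (map complex_of_real xs) = complex_of_real (prod_list xs)"
  by (induction xs) auto

lemma ofr_sum: "sum_list (map complex_of_real xs) = complex_of_real (sum_list xs)"
  by (induction xs) auto

lemma pos_char:
  assumes B: "B \<in> zero_one_mats n" and pe: "all_eigenvalues_positive_real B"
  shows "(\<forall>i<n. B $$ (i, i) = 1) \<and> acyclic (Eof n B)"
proof -
  have Bc: "B \<in> carrier_mat n n" and B01: "\<And>i j. i < n \<Longrightarrow> j < n \<Longrightarrow> B $$ (i, j) = 0 \<or> B $$ (i, j) = 1"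
    using B unfolding zero_one_mats_def by auto
  obtain es where ch: "char_poly B = (\<Prod>a\<leftarrow>es. [:- a, 1:])" and len: "length es = n"
    using char_poly_factorized[OF Bc] by blast
  have eig: "eigenvalue B e" if e: "e \<in> set es" for e
  proof -
    have "poly (char_poly B) e = prod_list (map (\<lambda>a. poly [:- a, 1:] e) es)"
      unfolding ch poly_prod_list by (simp add: o_def)
    also have "\<dots> = 0" using e by (auto simp: prod_list_zero_iff)
    finally show ?thesis using eigenvalue_root_char_poly[OF Bc] by simp
  qed
  have esr: "e \<in> \<real> \<and> 0 < Re e" if "e \<in> set es" for e
    using pe eig[OF that] unfolding all_eigenvalues_positive_real_def by blast
  define xs where "xs = map Re es"
  have es_eq: "es = map complex_of_real xs" unfolding xs_def map_map
    by (rule sym, rule map_idI) (use esr in \<open>auto simp: complex_is_Real_iff complex_eq_iff\<close>)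
  have xpos: "\<forall>x\<in>set xs. 0 < x" using esr unfolding xs_def by auto
  have lenx: "length xs = n" using len unfolding xs_def by simp
  obtain U P Q where sd: "schur_decomposition B es = (U, P, Q)" by (cases "schur_decomposition B es") auto
  from schur_decomposition[OF Bc ch sd] have sim: "similar_mat_wit B U P Q"
    and ut: "upper_triangular U" and dg: "diag_mat U = es" by auto
  have Uc: "U \<in> carrier_mat n n" and Pc: "P \<in> carrier_mat n n" and Qc: "Q \<in> carrier_mat n n"
    using sim Bc unfolding similar_mat_wit_def Let_def by auto
  have detB: "det B = prod_list es"
    using det_similar[OF sim Bc] det_upper_triangular[OF ut Uc] dg by simp
  have trB: "mtrace B = sum_list es"
    using mtrace_similar[OF sim Bc] mtrace_diag[of U] dg by simp
  define Bi :: "int mat" where "Bi = mat n n (\<lambda>(i, j). if B $$ (i, j) = 1 then 1 else 0)"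
  have BBi: "map_mat of_int Bi = B"
  proof (rule eq_matI)
    fix i j assume "i < dim_row B" "j < dim_col B"
    then have "i < n" "j < n" using Bc by auto
    then show "map_mat of_int Bi $$ (i, j) = B $$ (i, j)" using B01[of i j] by (auto simp: Bi_def)
  qed (use Bc in \<open>auto simp: Bi_def\<close>)
  have "det B = of_int (det Bi)"
  proof -
    have "det (map_mat (of_int :: int \<Rightarrow> complex) Bi) = of_int (det Bi)" by (rule of_int_hom.hom_det)
    then show ?thesis unfolding BBi .
  qed
  then have "complex_of_real (prod_list xs) = complex_of_real (of_int (det Bi))"
    using detB unfolding es_eq by (simp add: ofr_prod)
  then have pxd: "prod_list xs = of_int (det Bi)" using of_real_eq_iff by blast
  have "0 < prod_list xs" using xpos by (induction xs) auto
  then have "det Bi \<ge> 1" using pxd by simp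
  then have pr1: "prod_list xs \<ge> 1" using pxd by simp
  have sumRe: "(\<Sum>i\<in>{0..<n}. Re (B $$ (i, i))) = sum_list xs"
  proof -
    have "(\<Sum>i\<in>{0..<n}. Re (B $$ (i, i))) = Re (mtrace B)" using Bc by (simp add: mtrace_def)
    also have "\<dots> = sum_list xs" unfolding trB es_eq by (simp add: ofr_sum)
    finally show ?thesis .
  qed
  have Rele: "Re (B $$ (i, i)) \<le> 1" if "i < n" for i using B01[OF that that] by auto
  have "(\<Sum>i\<in>{0..<n}. Re (B $$ (i, i))) \<le> (\<Sum>i\<in>{0..<n}. 1)" using Rele by (intro sum_mono) auto
  then have sm: "sum_list xs \<le> length xs" using sumRe lenx by simp
  have ones: "\<forall>x\<in>set xs. x = 1" using real_list_ones[OF xpos pr1 sm] .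
  then have "sum_list xs = length xs" by (induction xs) auto
  then have "(\<Sum>i\<in>{0..<n}. 1 - Re (B $$ (i, i))) = 0" using sumRe lenx by (simp add: sum_subtractf)
  then have "\<forall>i\<in>{0..<n}. 1 - Re (B $$ (i, i)) = 0" using Rele by (subst sum_nonneg_eq_0_iff[symmetric]) auto
  then have diag1: "\<forall>i<n. B $$ (i, i) = 1"
  proof (intro allI impI)
    fix i assume h: "\<forall>i\<in>{0..<n}. 1 - Re (B $$ (i, i)) = 0" and i: "i < n"
    then have "Re (B $$ (i, i)) = 1" by auto
    then show "B $$ (i, i) = 1" using B01[OF i i] by auto
  qed
  have es1: "\<forall>e\<in>set es. e = 1" using ones unfolding es_eq by auto
  define N where "N = char_matrix U 1"
  have sim2: "similar_mat_wit (char_matrix B 1) N P Q"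
    unfolding N_def by (rule similar_mat_wit_char_matrix[OF sim])
  have Nc: "N \<in> carrier_mat n n" using Uc unfolding N_def char_matrix_def by auto
  have Nsu: "N $$ (i, j) = 0" if "i < n" "j < n" "j \<le> i" for i j
  proof (cases "j = i")
    case True
    have "U $$ (i, i) = es ! i" using dg[symmetric] that Uc by (simp add: diag_mat_def)
    then have "U $$ (i, i) = 1" using es1 len that by simp
    then show ?thesis using True that Uc unfolding N_def char_matrix_def by simp
  next
    case False
    then have "U $$ (i, j) = 0" using ut that Uc by (auto simp: upper_triangular_def)
    then show ?thesis using False that Uc unfolding N_def char_matrix_def by simp
  qed
  have Nk0: "N ^\<^sub>m k = 0\<^sub>m n n" if "k \<ge> n" for k
  proof (rule eq_matI)
    fix i j assume "i < dim_row (0\<^sub>m n n :: complex mat)" "j < dim_col (0\<^sub>m n n :: complex mat)"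
    then have ij: "i < n" "j < n" by auto
    show "(N ^\<^sub>m k) $$ (i, j) = 0\<^sub>m n n $$ (i, j)"
      using strict_upper_pow[OF Nc Nsu ij] that ij by simp
  qed (use Nc in auto)
  have Ak0: "char_matrix B 1 ^\<^sub>m k = 0\<^sub>m n n" if "k \<ge> n" for k
    using similar_mat_wit_pow_id[OF sim2, of k] Nk0[OF that] Pc Qc by simp
  define Ai :: "int mat" where "Ai = mat n n (\<lambda>(i, j). if i \<noteq> j \<and> B $$ (i, j) = 1 then 1 else 0)"
  have Aic: "Ai \<in> carrier_mat n n" unfolding Ai_def by simp
  have AAi: "map_mat of_int Ai = char_matrix B 1"
  proof (rule eq_matI)
    fix i j assume "i < dim_row (char_matrix B 1)" "j < dim_col (char_matrix B 1)"
    then have ij: "i < n" "j < n" using Bc by (auto simp: char_matrix_def)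
    then show "map_mat of_int Ai $$ (i, j) = char_matrix B 1 $$ (i, j)"
      using B01[of i j] diag1 Bc by (auto simp: Ai_def char_matrix_def)
  qed (use Bc in \<open>auto simp: Ai_def char_matrix_def\<close>)
  have Aik0: "(Ai ^\<^sub>m k) $$ (i, j) = 0" if "k \<ge> n" "i < n" "j < n" for k i j
  proof -
    have "map_mat (of_int :: int \<Rightarrow> complex) (Ai ^\<^sub>m k) = (map_mat of_int Ai) ^\<^sub>m k"
      by (rule of_int_hom.mat_hom_pow[OF Aic])
    then have "map_mat of_int (Ai ^\<^sub>m k) = (0\<^sub>m n n :: complex mat)"
      unfolding AAi Ak0[OF that(1)] .
    then have e: "map_mat (of_int :: int \<Rightarrow> complex) (Ai ^\<^sub>m k) $$ (i, j) = (0\<^sub>m n n :: complex mat) $$ (i, j)"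
      by simp
    have d: "dim_row (Ai ^\<^sub>m k) = n" "dim_col (Ai ^\<^sub>m k) = n" using Aic by auto
    have "(of_int ((Ai ^\<^sub>m k) $$ (i, j)) :: complex) = 0"
      using e d that by simp
    then show ?thesis by simp
  qed
  have Esub: "Eof n B \<subseteq> {..<n} \<times> {..<n}" unfolding Eof_def by auto
  have ac: "acyclic (Eof n B)"
  proof (unfold acyclic_def, intro allI notI)
    fix i assume "(i, i) \<in> (Eof n B)\<^sup>+"
    then obtain m where m: "m > 0" "(i, i) \<in> Eof n B ^^ m" using trancl_power by blast
    have i: "i < n" using trancl_subset_Sigma[OF Esub] \<open>(i, i) \<in> (Eof n B)\<^sup>+\<close> by auto
    have p: "(i, i) \<in> Eof n B ^^ (m * n)" using relpow_loop[OF m(2)] .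
    have nn: "\<And>i j. i < n \<Longrightarrow> j < n \<Longrightarrow> Ai $$ (i, j) \<ge> 0" by (simp add: Ai_def)
    have edge: "\<And>i j. (i, j) \<in> Eof n B \<Longrightarrow> i < n \<and> j < n \<and> Ai $$ (i, j) \<ge> 1"
      by (auto simp: Ai_def Eof_def)
    have "(Ai ^\<^sub>m (m * n)) $$ (i, i) \<ge> 1"
      using int_path_pow[OF Aic nn edge i i, where k = "m * n"] p by blast
    moreover have "(Ai ^\<^sub>m (m * n)) $$ (i, i) = 0" using Aik0[OF _ i i] m(1) by simp
    ultimately show False by simp
  qed
  show ?thesis using diag1 ac by blast
qed



lemma Mof_Eof: assumes B: "B \<in> zero_one_mats n" and d: "\<forall>i<n. B $$ (i, i) = 1"
  shows "Mof n (Eof n B) = B"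
proof (rule eq_matI)
  have Bc: "B \<in> carrier_mat n n" and B01: "\<And>i j. i < n \<Longrightarrow> j < n \<Longrightarrow> B $$ (i, j) = 0 \<or> B $$ (i, j) = 1"
    using B unfolding zero_one_mats_def by auto
  fix i j assume "i < dim_row B" "j < dim_col B"
  then have ij: "i < n" "j < n" using Bc by auto
  show "Mof n (Eof n B) $$ (i, j) = B $$ (i, j)"
    using ij d B01[OF ij] by (auto simp: Mof_def Eof_def)
qed (use B in \<open>auto simp: Mof_def zero_one_mats_def\<close>)

lemma bij_Mof: "bij_betw (Mof n) (acyclic_digraphs n) (pos_eig_01_mats n)"
proof (rule bij_betw_imageI)
  show "inj_on (Mof n) (acyclic_digraphs n)"
  proof (rule inj_onI)
    fix E1 E2 assume E1: "E1 \<in> acyclic_digraphs n" and E2: "E2 \<in> acyclic_digraphs n"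
      and eq: "Mof n E1 = Mof n E2"
    have "Eof n (Mof n E1) = E1" using Eof_Mof[OF conjunct1[OF acyclic_digraphsD[OF E1]] acyc_noloop[OF conjunct2[OF acyclic_digraphsD[OF E1]]]] .
    moreover have "Eof n (Mof n E2) = E2" using Eof_Mof[OF conjunct1[OF acyclic_digraphsD[OF E2]] acyc_noloop[OF conjunct2[OF acyclic_digraphsD[OF E2]]]] .
    ultimately show "E1 = E2" using eq by metis
  qed
  show "Mof n ` acyclic_digraphs n = pos_eig_01_mats n"
  proof
    show "Mof n ` acyclic_digraphs n \<subseteq> pos_eig_01_mats n"
    proof
      fix B assume "B \<in> Mof n ` acyclic_digraphs n"
      then obtain E where E: "E \<in> acyclic_digraphs n" and BE: "B = Mof n E" by auto
      have "B \<in> zero_one_mats n" unfolding BE zero_one_mats_def by (auto simp: Mof_def)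
      moreover have "all_eigenvalues_positive_real B"
        unfolding BE using acyclic_digraphsD[OF E] by (intro acyclic_pos) auto
      ultimately show "B \<in> pos_eig_01_mats n" unfolding pos_eig_01_mats_def by simp
    qed
    show "pos_eig_01_mats n \<subseteq> Mof n ` acyclic_digraphs n"
    proof
      fix B assume "B \<in> pos_eig_01_mats n"
      then have B: "B \<in> zero_one_mats n" and pe: "all_eigenvalues_positive_real B"
        unfolding pos_eig_01_mats_def by auto
      from pos_char[OF B pe] have d: "\<forall>i<n. B $$ (i, i) = 1" and ac: "acyclic (Eof n B)" by auto
      have "Eof n B \<in> acyclic_digraphs n" using ac unfolding acyclic_digraphs_def Eof_def by auto
      then show "B \<in> Mof n ` acyclic_digraphs n" using Mof_Eof[OF B d] by force
    qed
  qed
qed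

theorem mainTheorem5:
  fixes n :: nat
  assumes "n \<ge> 1"
  shows "num_pos_eig_01_classes n = num_unlabeled_acyclic_digraphs n"
proof -
  have "card (acyclic_digraphs n // {(E1, E2). E1 \<in> acyclic_digraphs n \<and> E2 \<in> acyclic_digraphs n
                                          \<and> digraph_iso n E1 E2})
      = card (pos_eig_01_mats n // {(B1, B2). B1 \<in> pos_eig_01_mats n \<and> B2 \<in> pos_eig_01_mats n
                                          \<and> perm_equiv n B1 B2})"
    by (rule card_quotient_bij[OF bij_Mof]) (rule iso_equiv)
  then show ?thesis unfolding num_pos_eig_01_classes_def num_unlabeled_acyclic_digraphs_def by simp
qed


end
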